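(* Fix $r\in(0,|\xi|_c)$ and let $\alpha(s)=\alpha(r;s)$ for $s>0$. Then: (1) $\alpha\in C^{0,1}_{loc}((0,\infty))\cap C^0((0,\infty))$ and $\alpha$ is strictly increasing in $s$; (2) there exist constants $C_0,C_1,C_2>0$ depending on $\rho_\pm,\mu_\pm,\sigma_\pm,b,g,r$ such that for all $s>0$ $$\alpha(s)\le-C_0+sC_1\quad\text{and}\quad\alpha(s)\ge-\frac{2g(\rho_+-\rho_-)}{\rho_-}r+sC_2.$$
   Context: Fix $b,g>0$, $\rho_+>\rho_->0$, $\mu_\pm>0$, $\sigma_\pm\ge0$ (either both zero or both positive); $[\![\rho]\!]=\rho_+-\rho_-$. Let $\rho(x_3),\mu(x_3)$ equal $\rho_+,\mu_+$ on $(0,1)$ and $\rho_-,\mu_-$ on $(-b,0)$. $X=\{\psi\in H^2((-b,1)):\psi(-b)=\psi'(-b)=0\}$. For $r>0,s>0$: $E(\psi;r,s)=\frac12\int_{-b}^1s\mu(4r^2|\psi'|^2+|r^2\psi+\psi''|^2)dx_3+\frac12r^2(\sigma_+r^2+g\rho_+)|\psi(1)|^2+\frac12r^2(\sigma_-r^2-g[\![\rho]\!])|\psi(0)|^2$, $J(\psi;r)=\frac12\int_{-b}^1\rho(r^2|\psi|^2+|\psi'|^2)dx_3$, $\alpha(r;s)=\inf\{E(\psi;r,s):\psi\in X,\ J(\psi;r)=1\}$. $|\xi|_c=\sqrt{g[\![\rho]\!]/\sigma_-}$ if $\sigma_->0$, $|\xi|_c=\infty$ if $\sigma_-=0$. 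*)

theory Defs
  imports "HOL-Analysis.Analysis"
begin

text \<open>Piecewise coefficients: upper fluid on (0,1), lower fluid on (-b,0).
  The value at the single point 0 is irrelevant (measure zero).\<close>
definition pw :: "real \<Rightarrow> real \<Rightarrow> real \<Rightarrow> real" where
  "pw vp vm x = (if x > 0 then vp else vm)"

text \<open>H^2 on the bounded interval [a,c], via its continuous representative:
  psi is differentiable on [a,c] with derivative psi1, psi1 is absolutely continuous
  with weak derivative psi2 (psi1 x = psi1 a + integral of psi2 over [a,x]),
  and psi2 is square integrable.\<close>
definition H2_triple :: "real \<Rightarrow> real \<Rightarrow> (real \<Rightarrow> real) \<Rightarrow> (real \<Rightarrow> real) \<Rightarrow> (real \<Rightarrow> real) \<Rightarrow> bool" where
  "H2_triple a c psi psi1 psi2 \<longleftrightarrow>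
     (\<forall>x\<in>{a..c}. (psi has_real_derivative psi1 x) (at x within {a..c})) \<and>
     set_integrable lborel {a..c} psi2 \<and>
     set_integrable lborel {a..c} (\<lambda>x. (psi2 x)\<^sup>2) \<and>
     (\<forall>x\<in>{a..c}. psi1 x = psi1 a + (LINT t:{a..x}|lborel. psi2 t))"

definition in_X :: "real \<Rightarrow> (real \<Rightarrow> real) \<Rightarrow> (real \<Rightarrow> real) \<Rightarrow> (real \<Rightarrow> real) \<Rightarrow> bool" where
  "in_X b psi psi1 psi2 \<longleftrightarrow> H2_triple (-b) 1 psi psi1 psi2 \<and> psi (-b) = 0 \<and> psi1 (-b) = 0"

definition energyE ::
  "real \<Rightarrow> real \<Rightarrow> real \<Rightarrow> real \<Rightarrow> real \<Rightarrow> real \<Rightarrow> real \<Rightarrow> real \<Rightarrow>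
   (real \<Rightarrow> real) \<Rightarrow> (real \<Rightarrow> real) \<Rightarrow> (real \<Rightarrow> real) \<Rightarrow> real \<Rightarrow> real \<Rightarrow> real" where
  "energyE b g rhop rhom mup mum sigp sigm psi psi1 psi2 r s =
     1/2 * (LINT x:{-b..1}|lborel. s * pw mup mum x * (4 * r\<^sup>2 * (psi1 x)\<^sup>2 + (r\<^sup>2 * psi x + psi2 x)\<^sup>2))
     + 1/2 * r\<^sup>2 * (sigp * r\<^sup>2 + g * rhop) * (psi 1)\<^sup>2
     + 1/2 * r\<^sup>2 * (sigm * r\<^sup>2 - g * (rhop - rhom)) * (psi 0)\<^sup>2"

definition functJ ::
  "real \<Rightarrow> real \<Rightarrow> real \<Rightarrow> (real \<Rightarrow> real) \<Rightarrow> (real \<Rightarrow> real) \<Rightarrow> real \<Rightarrow> real" where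
  "functJ b rhop rhom psi psi1 r =
     1/2 * (LINT x:{-b..1}|lborel. pw rhop rhom x * (r\<^sup>2 * (psi x)\<^sup>2 + (psi1 x)\<^sup>2))"

definition alpha ::
  "real \<Rightarrow> real \<Rightarrow> real \<Rightarrow> real \<Rightarrow> real \<Rightarrow> real \<Rightarrow> real \<Rightarrow> real \<Rightarrow> real \<Rightarrow> real \<Rightarrow> real" where
  "alpha b g rhop rhom mup mum sigp sigm r s =
     Inf {energyE b g rhop rhom mup mum sigp sigm psi psi1 psi2 r s | psi psi1 psi2.
            in_X b psi psi1 psi2 \<and> functJ b rhop rhom psi psi1 r = 1}"

definition xi_crit :: "real \<Rightarrow> real \<Rightarrow> real \<Rightarrow> real \<Rightarrow> ereal" where
  "xi_crit g rhop rhom sigm =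
     (if sigm > 0 then ereal (sqrt (g * (rhop - rhom) / sigm)) else \<infinity>)"

end

theory Submission
  imports Defs
begin

lemma rs_meas: "(f::real\<Rightarrow>real) \<in> borel_measurable (restrict_space lborel S) \<longleftrightarrow> f \<in> borel_measurable (restrict_space borel S)"
  by (simp only: measurable_cong_sets[OF sets_restrict_space_cong[OF sets_lborel] refl])

lemma sbm_of_rs:
  assumes "(f::real\<Rightarrow>real) \<in> borel_measurable (restrict_space borel S)" "S \<in> sets borel"
  shows "set_borel_measurable lborel S f"
  unfolding set_borel_measurable_def
  using assms by (subst borel_measurable_restrict_space_iff[symmetric]) (auto simp: rs_meas)

lemma pw_meas[measurable]: "pw vp vm \<in> borel_measurable borel"
  unfolding pw_def by measurable

lemma pw_meas_rs[measurable]: "pw vp vm \<in> borel_measurable (restrict_space borel S)"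
  by (rule measurable_restrict_space1) (rule pw_meas)

lemma pw_int:
  assumes "set_integrable lborel S G" "G \<in> borel_measurable (restrict_space borel S)" "S \<in> sets borel"
  shows "set_integrable lborel S (\<lambda>x. pw vp vm x * G x)"
proof (rule set_integrable_bound)
  show "set_integrable lborel S (\<lambda>x. (\<bar>vp\<bar>+\<bar>vm\<bar>) * G x)" using assms(1) by auto
  have "(\<lambda>x. pw vp vm x * G x) \<in> borel_measurable (restrict_space borel S)"
    using assms(2) by measurable
  then show "set_borel_measurable lborel S (\<lambda>x. pw vp vm x * G x)"
    by (rule sbm_of_rs) fact
  show "AE x in lborel. x \<in> S \<longrightarrow> norm (pw vp vm x * G x) \<le> norm ((\<bar>vp\<bar>+\<bar>vm\<bar>) * G x)"
    by (auto simp: pw_def abs_mult intro!: mult_right_mono)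
qed

lemma X_basic:
  assumes X: "in_X b psi psi1 psi2" and b: "b > 0"
  shows "continuous_on {-b..1} psi" "continuous_on {-b..1} psi1"
    "psi2 \<in> borel_measurable (restrict_space borel {-b..1})"
    "set_integrable lborel {-b..1} (\<lambda>x. (psi2 x)\<^sup>2)"
    "\<And>x. x \<in> {-b..1} \<Longrightarrow> (psi has_real_derivative psi1 x) (at x within {-b..1})"
    "psi (-b) = 0" "psi1 (-b) = 0"
proof -
  have XX: "H2_triple (-b) 1 psi psi1 psi2 \<and> psi (-b) = 0 \<and> psi1 (-b) = 0" using X unfolding in_X_def .
  note H = conjunct1[OF XX]
  have HH: "(\<forall>x\<in>{-b..1}. (psi has_real_derivative psi1 x) (at x within {-b..1})) \<and>
     set_integrable lborel {-b..1} psi2 \<and>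
     set_integrable lborel {-b..1} (\<lambda>x. (psi2 x)\<^sup>2) \<and>
     (\<forall>x\<in>{-b..1}. psi1 x = psi1 (-b) + (LINT t:{-b..x}|lborel. psi2 t))"
    using H unfolding H2_triple_def .
  note H1 = conjunct1[OF HH]
  note int = conjunct1[OF conjunct2[OF HH]]
  note H3 = conjunct1[OF conjunct2[OF conjunct2[OF HH]]]
  note H4 = conjunct2[OF conjunct2[OF conjunct2[OF HH]]]
  show "continuous_on {-b..1} psi"
    by (rule DERIV_continuous_on) (rule H1[rule_format])
  have eq: "\<forall>x\<in>{-b..1}. psi1 x = psi1 (-b) + integral {-b..x} psi2"
  proof
    fix x assume x: "x \<in> {-b..1}"
    have "set_integrable lborel {-b..x} psi2"
      by (rule set_integrable_subset[OF int]) (use x in auto)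
    then have "(LINT t:{-b..x}|lborel. psi2 t) = integral {-b..x} psi2"
      by (rule set_borel_integral_eq_integral)
    then show "psi1 x = psi1 (-b) + integral {-b..x} psi2" using bspec[OF H4 x] by simp
  qed
  have "continuous_on {-b..1} (\<lambda>x. psi1 (-b) + integral {-b..x} psi2)"
    by (intro continuous_intros indefinite_integral_continuous_1 set_borel_integral_eq_integral(1)[OF int])
  then show "continuous_on {-b..1} psi1"
  proof (rule continuous_on_eq)
    fix x assume "x \<in> {-b..1}"
    show "psi1 (-b) + integral {-b..x} psi2 = psi1 x"
      using bspec[OF eq \<open>x \<in> {-b..1}\<close>] by (rule sym)
  qed
  have "integrable (restrict_space lborel {-b..1}) psi2"
    using int by (subst set_integrable_eq[symmetric]) auto
  then have "psi2 \<in> borel_measurable (restrict_space lborel {-b..1})" by (rule borel_measurable_integrable)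
  then show "psi2 \<in> borel_measurable (restrict_space borel {-b..1})" by (simp only: rs_meas)
  show "set_integrable lborel {-b..1} (\<lambda>x. (psi2 x)\<^sup>2)" by (rule H3)
  show "\<And>x. x \<in> {-b..1} \<Longrightarrow> (psi has_real_derivative psi1 x) (at x within {-b..1})"
    by (rule H1[rule_format])
  show "psi (-b) = 0" by (rule conjunct1[OF conjunct2[OF XX]])
  show "psi1 (-b) = 0" by (rule conjunct2[OF conjunct2[OF XX]])
qed

lemma cont_int: "continuous_on {a..c} f \<Longrightarrow> set_integrable lborel {a..c} (f::real\<Rightarrow>real)"
  by (rule borel_integrable_atLeastAtMost')

lemma cont_meas: "continuous_on S f \<Longrightarrow> (f::real\<Rightarrow>real) \<in> borel_measurable (restrict_space borel S)"
  by (rule borel_measurable_continuous_on_restrict)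

lemma sq_le: "(a+b)\<^sup>2 \<le> 2*a\<^sup>2 + 2*(b::real)\<^sup>2"
proof -
  have "(a+b)\<^sup>2 + (a-b)\<^sup>2 = 2*a\<^sup>2 + 2*b\<^sup>2" by (simp add: power2_eq_square algebra_simps)
  moreover have "0 \<le> (a-b)\<^sup>2" by simp
  ultimately show ?thesis by linarith
qed

lemma X_int:
  assumes X: "in_X b psi psi1 psi2" and b: "b > 0"
  shows "set_integrable lborel {-b..1} (\<lambda>x. pw vp vm x * (r\<^sup>2 * (psi x)\<^sup>2 + (psi1 x)\<^sup>2))"
    "set_integrable lborel {-b..1} (\<lambda>x. pw vp vm x * (4 * r\<^sup>2 * (psi1 x)\<^sup>2 + (r\<^sup>2 * psi x + psi2 x)\<^sup>2))"
proof -
  note B = X_basic[OF X b]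
  have c1: "continuous_on {-b..1} (\<lambda>x. r\<^sup>2 * (psi x)\<^sup>2 + (psi1 x)\<^sup>2)"
    using B by (intro continuous_intros)
  show "set_integrable lborel {-b..1} (\<lambda>x. pw vp vm x * (r\<^sup>2 * (psi x)\<^sup>2 + (psi1 x)\<^sup>2))"
    by (rule pw_int[OF cont_int[OF c1] cont_meas[OF c1]]) auto
  have m1[measurable]: "psi \<in> borel_measurable (restrict_space borel {-b..1})"
    "psi1 \<in> borel_measurable (restrict_space borel {-b..1})"
    "psi2 \<in> borel_measurable (restrict_space borel {-b..1})"
    using B by (auto intro: cont_meas)
  have gm: "(\<lambda>x. 4 * r\<^sup>2 * (psi1 x)\<^sup>2 + (r\<^sup>2 * psi x + psi2 x)\<^sup>2) \<in> borel_measurable (restrict_space borel {-b..1})"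
    by measurable
  have c2: "continuous_on {-b..1} (\<lambda>x. 4 * r\<^sup>2 * (psi1 x)\<^sup>2 + 2 * (r\<^sup>2 * psi x)\<^sup>2)"
    using B by (intro continuous_intros)
  have bi: "set_integrable lborel {-b..1} (\<lambda>x. (4 * r\<^sup>2 * (psi1 x)\<^sup>2 + 2 * (r\<^sup>2 * psi x)\<^sup>2) + 2 * (psi2 x)\<^sup>2)"
    using cont_int[OF c2] B(4) by auto
  have gi: "set_integrable lborel {-b..1} (\<lambda>x. 4 * r\<^sup>2 * (psi1 x)\<^sup>2 + (r\<^sup>2 * psi x + psi2 x)\<^sup>2)"
  proof (rule set_integrable_bound[OF bi])
    show "set_borel_measurable lborel {-b..1} (\<lambda>x. 4 * r\<^sup>2 * (psi1 x)\<^sup>2 + (r\<^sup>2 * psi x + psi2 x)\<^sup>2)"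
      by (rule sbm_of_rs[OF gm]) auto
    have "\<bar>4 * r\<^sup>2 * (psi1 x)\<^sup>2 + (r\<^sup>2 * psi x + psi2 x)\<^sup>2\<bar> \<le> \<bar>(4 * r\<^sup>2 * (psi1 x)\<^sup>2 + 2 * (r\<^sup>2 * psi x)\<^sup>2) + 2 * (psi2 x)\<^sup>2\<bar>" for x
    proof -
      have "(r\<^sup>2 * psi x + psi2 x)\<^sup>2 \<le> 2 * (r\<^sup>2 * psi x)\<^sup>2 + 2 * (psi2 x)\<^sup>2"
        by (rule sq_le)
      then show ?thesis by (simp add: abs_of_nonneg)
    qed
    then show "AE x in lborel. x \<in> {-b..1} \<longrightarrow> norm (4 * r\<^sup>2 * (psi1 x)\<^sup>2 + (r\<^sup>2 * psi x + psi2 x)\<^sup>2) \<le> norm ((4 * r\<^sup>2 * (psi1 x)\<^sup>2 + 2 * (r\<^sup>2 * psi x)\<^sup>2) + 2 * (psi2 x)\<^sup>2)"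
      by auto
  qed
  show "set_integrable lborel {-b..1} (\<lambda>x. pw vp vm x * (4 * r\<^sup>2 * (psi1 x)\<^sup>2 + (r\<^sup>2 * psi x + psi2 x)\<^sup>2))"
    by (rule pw_int[OF gi gm]) auto
qed


lemma LINT_eq_FTC:
  assumes "a \<le> c" "\<And>x. x \<in> {a..c} \<Longrightarrow> (F has_real_derivative f x) (at x within {a..c})"
    "continuous_on {a..c} f"
  shows "(LINT x:{a..c}|lborel. f x) = F c - F (a::real)"
  unfolding set_lebesgue_integral_def
  using assms by (intro integral_FTC_atLeastAtMost) (auto simp: has_real_derivative_iff_has_vector_derivative)

lemma poincare:
  assumes X: "in_X b psi psi1 psi2" and b: "b > 0"
  shows "(LINT x:{-b..1}|lborel. (psi x)\<^sup>2) \<le> 4*(1+b)\<^sup>2 * (LINT x:{-b..1}|lborel. (psi1 x)\<^sup>2)"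
proof -
  note B = X_basic[OF X b]
  define f where "f = (\<lambda>x. (psi x)\<^sup>2 + 2*(x-1)*psi x*psi1 x)"
  have cf: "continuous_on {-b..1} f" unfolding f_def using B by (intro continuous_intros)
  have "(LINT x:{-b..1}|lborel. f x) = (\<lambda>x. (x-1)*(psi x)\<^sup>2) 1 - (\<lambda>x. (x-1)*(psi x)\<^sup>2) (-b)"
  proof (rule LINT_eq_FTC)
    show "- b \<le> 1" using b by simp
    show "continuous_on {-b..1} f" by fact
    fix x assume x: "x \<in> {-b..1}"
    show "((\<lambda>x. (x-1)*(psi x)\<^sup>2) has_real_derivative f x) (at x within {-b..1})"
      unfolding f_def
      by (rule derivative_eq_intros B(5)[OF x] refl)+ (simp add: algebra_simps power2_eq_square)
  qed
  then have f0: "(LINT x:{-b..1}|lborel. f x) = 0" using B(6) by simp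
  define h where "h = (\<lambda>x. (psi x)\<^sup>2/2 - 2*(1+b)\<^sup>2 * (psi1 x)\<^sup>2)"
  have ch: "continuous_on {-b..1} h" unfolding h_def using B by (intro continuous_intros) auto
  have "(LINT x:{-b..1}|lborel. h x) \<le> (LINT x:{-b..1}|lborel. f x)"
  proof (rule set_integral_mono[OF cont_int[OF ch] cont_int[OF cf]])
    fix x assume x: "x \<in> {-b..1}"
    have sq: "0 \<le> (psi x + 2*(x-1)*psi1 x)\<^sup>2" by simp
    have "(1-x)\<^sup>2 \<le> (1+b)\<^sup>2" using x b by (intro power_mono) auto
    moreover have "(x-1)\<^sup>2 = (1-x)\<^sup>2" by (simp add: power2_commute)
    ultimately have "(x-1)\<^sup>2 \<le> (1+b)\<^sup>2" by simp
    then have m: "(x-1)\<^sup>2 * (psi1 x)\<^sup>2 \<le> (1+b)\<^sup>2 * (psi1 x)\<^sup>2" by (intro mult_right_mono) auto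
    show "h x \<le> f x" unfolding h_def f_def
      using sq m by (simp add: power2_eq_square algebra_simps)
  qed
  moreover have "(LINT x:{-b..1}|lborel. h x) = (LINT x:{-b..1}|lborel. (psi x)\<^sup>2)/2 - 2*(1+b)\<^sup>2 * (LINT x:{-b..1}|lborel. (psi1 x)\<^sup>2)"
  proof -
    have i1: "set_integrable lborel {-b..1} (\<lambda>x. (psi x)\<^sup>2/2)" using B by (intro cont_int continuous_intros) auto
    have i2: "set_integrable lborel {-b..1} (\<lambda>x. 2*(1+b)\<^sup>2 * (psi1 x)\<^sup>2)" using B by (intro cont_int continuous_intros) auto
    show ?thesis unfolding h_def by (simp add: set_integral_diff(2)[OF i1 i2])
  qed
  ultimately show ?thesis using f0 by linarith
qed

lemma psi0_bound:
  assumes X: "in_X b psi psi1 psi2" and b: "b > 0" and r: "r > 0"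
  shows "(psi 0)\<^sup>2 \<le> (1/r) * (LINT x:{-b..1}|lborel. r\<^sup>2*(psi x)\<^sup>2 + (psi1 x)\<^sup>2)"
proof -
  note B = X_basic[OF X b]
  have sub: "{-b..0} \<subseteq> {-b..1}" by auto
  have c0: "continuous_on {-b..0} (\<lambda>x. 2 * psi x * psi1 x)"
    by (intro continuous_intros continuous_on_subset[OF B(1) sub] continuous_on_subset[OF B(2) sub])
  have "(LINT x:{-b..0}|lborel. 2 * psi x * psi1 x) = (\<lambda>x. (psi x)\<^sup>2) 0 - (\<lambda>x. (psi x)\<^sup>2) (-b)"
  proof (rule LINT_eq_FTC)
    show "- b \<le> 0" using b by simp
    show "continuous_on {-b..0} (\<lambda>x. 2 * psi x * psi1 x)" by fact
    fix x assume x: "x \<in> {-b..0}"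
    have d: "(psi has_real_derivative psi1 x) (at x within {-b..0})"
      by (rule has_field_derivative_subset[OF B(5) sub]) (use x in auto)
    show "((\<lambda>x. (psi x)\<^sup>2) has_real_derivative 2 * psi x * psi1 x) (at x within {-b..0})"
      by (rule derivative_eq_intros d refl)+ (simp add: algebra_simps power2_eq_square)
  qed
  then have e: "(LINT x:{-b..0}|lborel. 2 * psi x * psi1 x) = (psi 0)\<^sup>2" using B(6) by simp
  define G where "G = (\<lambda>x. r\<^sup>2*(psi x)\<^sup>2 + (psi1 x)\<^sup>2)"
  have cG: "continuous_on {-b..1} G" unfolding G_def using B by (intro continuous_intros)
  have cG0: "continuous_on {-b..0} (\<lambda>x. G x / r)" using r by (intro continuous_intros continuous_on_subset[OF cG sub]) auto
  have "(psi 0)\<^sup>2 \<le> (LINT x:{-b..0}|lborel. G x / r)"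
    unfolding e[symmetric]
  proof (rule set_integral_mono[OF cont_int[OF c0] cont_int[OF cG0]])
    fix x assume x: "x \<in> {-b..0}"
    have "0 \<le> (r * psi x - psi1 x)\<^sup>2" by simp
    then have "2 * r * psi x * psi1 x \<le> G x" unfolding G_def by (simp add: power2_eq_square algebra_simps)
    then show "2 * psi x * psi1 x \<le> G x / r" using r by (simp add: field_simps)
  qed
  also have "\<dots> = (LINT x:{-b..0}|lborel. G x) / r" by simp
  also have "(LINT x:{-b..0}|lborel. G x) \<le> (LINT x:{-b..1}|lborel. G x)"
  proof -
    have un: "{-b..1} = {-b..0} \<union> {0<..1}" using b by auto
    have iG: "set_integrable lborel {-b..1} G" by (rule cont_int[OF cG])
    have i1: "set_integrable lborel {-b..0} G" by (rule set_integrable_subset[OF iG]) auto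
    have i2: "set_integrable lborel {0<..1} G" by (rule set_integrable_subset[OF iG]) (use b in auto)
    have "0 \<le> (LINT x:{0<..1}|lborel. G x)"
      unfolding set_lebesgue_integral_def by (rule Bochner_Integration.integral_nonneg) (auto simp: G_def indicator_def)
    moreover have "(LINT x:{-b..1}|lborel. G x) = (LINT x:{-b..0}|lborel. G x) + (LINT x:{0<..1}|lborel. G x)"
      unfolding un by (rule set_integral_Un[OF _ i1 i2]) auto
    ultimately show ?thesis by simp
  qed
  then have "(LINT x:{-b..0}|lborel. G x) / r \<le> (LINT x:{-b..1}|lborel. G x) / r"
    using r by (simp add: divide_right_mono)
  finally show ?thesis by (simp add: G_def)
qed

lemma abstract_conclusion:
  fixes T :: "(real \<times> real) set" and f :: "real \<Rightarrow> real"
  assumes T0: "(A0,N0) \<in> T" and N0: "N0 < 0" and c: "c > 0" and K0: "K0 \<ge> 0"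
   and TB0: "\<forall>A N. (A,N) \<in> T \<longrightarrow> A \<ge> c \<and> N \<ge> -K0"
   and f0: "\<forall>s. s > 0 \<longrightarrow> f s = Inf ((\<lambda>(A,N). s*A+N) ` T)"
  shows "(\<forall>a c. 0 < a \<and> a \<le> c \<longrightarrow> (\<exists>L. L-lipschitz_on {a..c} f))
       \<and> continuous_on {0<..} f
       \<and> strict_mono_on {0<..} f
       \<and> (\<forall>s>0. f s \<le> N0 + s*A0 \<and> f s \<ge> -K0 + s*c)"
proof -
  have TB: "A \<ge> c \<and> N \<ge> -K0" if "(A,N) \<in> T" for A N using TB0 that by blast
  have f: "f s = Inf ((\<lambda>(A,N). s*A+N) ` T)" if "s > 0" for s using f0 that by blast

  have ne: "(\<lambda>(A,N). s*A+N) ` T \<noteq> {}" for s using T0 by auto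
  have lb: "x \<ge> -K0 + s*c" if s0: "s>0" and xin: "x \<in> (\<lambda>(A,N). s*A+N) ` T" for s x
  proof -
    obtain A N where "(A,N)\<in>T" "x = s*A+N" using xin by force
    moreover have "s*c \<le> s*A" using TB[OF \<open>(A,N)\<in>T\<close>] s0 by (intro mult_left_mono) auto
    ultimately show ?thesis using TB[OF \<open>(A,N)\<in>T\<close>] by linarith
  qed
  have bdd: "bdd_below ((\<lambda>(A,N). s*A+N) ` T)" if "s>0" for s
    using lb[OF that] by (auto intro!: bdd_belowI)
  have low: "f s \<le> s*A+N" if "s>0" "(A,N)\<in>T" for s A N
  proof -
    have "Inf ((\<lambda>(A,N). s*A+N) ` T) \<le> s*A+N"
      by (rule cInf_lower[OF _ bdd[OF \<open>s>0\<close>]]) (use that in force)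
    then show ?thesis using f[OF \<open>s>0\<close>] by simp
  qed
  have great: "y \<le> f s" if "s>0" "\<And>A N. (A,N)\<in>T \<Longrightarrow> y \<le> s*A+N" for s y
  proof -
    have "y \<le> Inf ((\<lambda>(A,N). s*A+N) ` T)"
      by (rule cInf_greatest[OF ne]) (use that in auto)
    then show ?thesis using f[OF \<open>s>0\<close>] by simp
  qed
  have P1: "f s \<le> N0 + s*A0 \<and> f s \<ge> -K0 + s*c" if "s>0" for s
    using low[OF that T0] great[OF that, of "-K0 + s*c"] lb[OF that] by force
  have P2: "f s2 \<ge> f s1 + (s2-s1)*c" if "0<s1" "s1<s2" for s1 s2
  proof (rule great)
    show "0 < s2" using that by simp
    fix A N assume AN: "(A,N)\<in>T"
    have "f s1 \<le> s1*A+N" by (rule low) (use that AN in auto)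
    moreover have "(s2-s1)*c \<le> (s2-s1)*A" using TB[OF AN] that by (intro mult_left_mono) auto
    ultimately show "f s1 + (s2-s1)*c \<le> s2*A+N" by (simp add: algebra_simps)
  qed
  have P3: "f s2 - f s1 \<le> (s2-s1)/s1*(f s1 + K0)" if "0<s1" "s1\<le>s2" for s1 s2
  proof -
    define q where "q = s2/s1"
    have q: "q \<ge> 1" using that by (simp add: q_def)
    have "(f s2 - (q-1)*K0)/q \<le> f s1"
    proof (rule great)
      show "0<s1" by fact
      fix A N assume AN: "(A,N)\<in>T"
      have "f s2 \<le> s2*A+N" by (rule low) (use that AN in auto)
      also have "s2*A+N = q*(s1*A+N) - (q-1)*N" using that by (simp add: q_def field_simps)
      also have "\<dots> \<le> q*(s1*A+N) + (q-1)*K0"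
      proof -
        have "(q-1)*(-N) \<le> (q-1)*K0" using TB[OF AN] q by (intro mult_left_mono) auto
        then show ?thesis by (simp add: algebra_simps)
      qed
      finally have "f s2 - (q-1)*K0 \<le> q*(s1*A+N)" by simp
      then show "(f s2 - (q-1)*K0)/q \<le> s1*A+N" using q by (simp add: divide_le_eq mult.commute)
    qed
    then have "f s2 - (q-1)*K0 \<le> q * f s1" using q by (simp add: divide_le_eq mult.commute)
    then have "f s2 - f s1 \<le> (q-1)*(f s1 + K0)" by (simp add: algebra_simps)
    also have "q - 1 = (s2-s1)/s1" using that by (simp add: q_def field_simps)
    finally show ?thesis .
  qed
  have lip: "\<exists>L. L-lipschitz_on {a..d} f" if "0 < a" "a \<le> d" for a d
  proof
    define L where "L = (d*A0 + K0)/a"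
    have A0: "A0 \<ge> c" using TB[OF T0] by simp
    have L0: "0 \<le> L" unfolding L_def using that A0 c K0
      by (intro divide_nonneg_pos) (auto intro!: add_nonneg_nonneg mult_nonneg_nonneg)
    have one: "\<bar>f y - f x\<bar> \<le> L * (y - x)" if xy: "x \<in> {a..d}" "y \<in> {a..d}" "x \<le> y" for x y
    proof -
      have x0: "x > 0" using xy \<open>0<a\<close> by auto
      have "f y \<ge> f x"
        using P2[OF x0, of y] xy c by (cases "x = y") (auto intro: order_trans[rotated] simp: mult_nonneg_nonneg)
      moreover have "f y - f x \<le> (y-x)/x*(f x + K0)" using P3[OF x0 xy(3)] .
      moreover have "f x + K0 \<le> d*A0 + K0"
      proof -
        have "x*A0 \<le> d*A0" using xy A0 c by (intro mult_right_mono) auto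
        then show ?thesis using P1[OF x0] N0 by linarith
      qed
      moreover have "f x + K0 \<ge> 0" using P1[OF x0] mult_pos_pos[OF x0 c] by linarith
      moreover have "(y-x)/x \<le> (y-x)/a" using xy \<open>0<a\<close> by (intro divide_left_mono) auto
      moreover have "(y-x)/x \<ge> 0" using xy x0 by auto
      ultimately have "f y - f x \<le> (y-x)/a*(d*A0+K0)"
      proof -
        assume h1: "f y - f x \<le> (y-x)/x*(f x + K0)" and h2: "f x + K0 \<le> d*A0 + K0"
          and h3: "f x + K0 \<ge> 0" and h4: "(y-x)/x \<le> (y-x)/a" and h5: "(y-x)/x \<ge> 0"
        have "(y-x)/x*(f x + K0) \<le> (y-x)/a*(f x + K0)" using h3 h4 by (rule mult_right_mono[rotated])
        also have "\<dots> \<le> (y-x)/a*(d*A0 + K0)" using h2 h4 h5 by (intro mult_left_mono) auto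
        finally show ?thesis using h1 by linarith
      qed
      then show ?thesis using \<open>f y \<ge> f x\<close> by (simp add: L_def field_simps)
    qed
    show "L-lipschitz_on {a..d} f"
    proof (rule lipschitz_onI[OF _ L0])
      fix x y assume "x \<in> {a..d}" "y \<in> {a..d}"
      then show "dist (f x) (f y) \<le> L * dist x y"
        using one[of x y] one[of y x] by (cases "x \<le> y") (auto simp: dist_real_def abs_minus_commute)
    qed
  qed
  have cont: "continuous_on {0<..} f"
  proof (rule continuous_at_imp_continuous_on, rule ballI)
    fix x :: real assume "x \<in> {0<..}"
    then have x: "x > 0" by simp
    obtain L where "L-lipschitz_on {x/2..x+1} f" using lip[of "x/2" "x+1"] x by auto
    then have "continuous_on {x/2..x+1} f" by (rule lipschitz_on_continuous_on)
    moreover have "x \<in> interior {x/2..x+1}" using x by simp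
    ultimately show "isCont f x" by (rule continuous_on_interior)
  qed
  have sm: "strict_mono_on {0<..} f"
  proof (rule strict_mono_onI)
    fix r s :: real assume "r \<in> {0<..}" "s \<in> {0<..}" "r < s"
    then have "0 < r" "r < s" by auto
    moreover have "(s - r) * c > 0" using \<open>r < s\<close> c by simp
    ultimately show "f r < f s" using P2[of r s] by linarith
  qed
  show ?thesis using lip cont sm P1 by blast
qed


lemma energy_split:
  "energyE b g rhop rhom mup mum sigp sigm psi psi1 psi2 r s =
     s * ((LINT x:{-b..1}|lborel. pw mup mum x * (4 * r\<^sup>2 * (psi1 x)\<^sup>2 + (r\<^sup>2 * psi x + psi2 x)\<^sup>2)) / 2)
     + (1/2 * r\<^sup>2 * (sigp * r\<^sup>2 + g * rhop) * (psi 1)\<^sup>2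
     + 1/2 * r\<^sup>2 * (sigm * r\<^sup>2 - g * (rhop - rhom)) * (psi 0)\<^sup>2)"
proof -
  have "(LINT x:{-b..1}|lborel. s * pw mup mum x * (4 * r\<^sup>2 * (psi1 x)\<^sup>2 + (r\<^sup>2 * psi x + psi2 x)\<^sup>2))
     = s * (LINT x:{-b..1}|lborel. pw mup mum x * (4 * r\<^sup>2 * (psi1 x)\<^sup>2 + (r\<^sup>2 * psi x + psi2 x)\<^sup>2))"
    by (simp add: mult.assoc)
  then show ?thesis unfolding energyE_def by simp
qed

lemma J_facts:
  assumes X: "in_X b psi psi1 psi2" and b: "b > 0" and r: "r > 0" and rho: "rhop \<ge> rhom" "rhom > 0"
  shows "(psi 0)\<^sup>2 \<le> 2 * functJ b rhop rhom psi psi1 r / (r * rhom)"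
    "2 * functJ b rhop rhom psi psi1 r \<le> rhop * (4 * r\<^sup>2 * (1+b)\<^sup>2 + 1) * (LINT x:{-b..1}|lborel. (psi1 x)\<^sup>2)"
proof -
  note B = X_basic[OF X b]
  define G where "G = (\<lambda>x. r\<^sup>2*(psi x)\<^sup>2 + (psi1 x)\<^sup>2)"
  have cG: "continuous_on {-b..1} G" unfolding G_def using B by (intro continuous_intros)
  have iG: "set_integrable lborel {-b..1} G" by (rule cont_int[OF cG])
  have iP: "set_integrable lborel {-b..1} (\<lambda>x. pw rhop rhom x * G x)"
    unfolding G_def by (rule X_int(1)[OF X b])
  have J: "2 * functJ b rhop rhom psi psi1 r = (LINT x:{-b..1}|lborel. pw rhop rhom x * G x)"
    unfolding functJ_def G_def by simp
  have "(LINT x:{-b..1}|lborel. rhom * G x) \<le> (LINT x:{-b..1}|lborel. pw rhop rhom x * G x)"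
    by (rule set_integral_mono) (use iG iP rho in \<open>auto simp: pw_def G_def intro!: mult_right_mono\<close>)
  then have a1: "rhom * (LINT x:{-b..1}|lborel. G x) \<le> 2 * functJ b rhop rhom psi psi1 r" using J by simp
  have a2: "(psi 0)\<^sup>2 \<le> (1/r) * (LINT x:{-b..1}|lborel. G x)"
    using psi0_bound[OF X b r] by (simp add: G_def)
  show "(psi 0)\<^sup>2 \<le> 2 * functJ b rhop rhom psi psi1 r / (r * rhom)"
  proof -
    have "r * (psi 0)\<^sup>2 \<le> r * ((1/r) * (LINT x:{-b..1}|lborel. G x))"
      using a2 r by (intro mult_left_mono) auto
    also have "r * ((1/r) * (LINT x:{-b..1}|lborel. G x)) = (LINT x:{-b..1}|lborel. G x)" using r by simp
    finally have "r * (psi 0)\<^sup>2 \<le> (LINT x:{-b..1}|lborel. G x)" .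
    then have "rhom * (r * (psi 0)\<^sup>2) \<le> rhom * (LINT x:{-b..1}|lborel. G x)"
      using rho by (intro mult_left_mono) auto
    also have "\<dots> \<le> 2 * functJ b rhop rhom psi psi1 r" by (rule a1)
    finally have "(psi 0)\<^sup>2 * (r * rhom) \<le> 2 * functJ b rhop rhom psi psi1 r" by (simp only: ac_simps)
    moreover have "r * rhom > 0" using r rho by simp
    ultimately show ?thesis by (simp add: pos_le_divide_eq)
  qed
  have "(LINT x:{-b..1}|lborel. pw rhop rhom x * G x) \<le> (LINT x:{-b..1}|lborel. rhop * G x)"
    by (rule set_integral_mono) (use iG iP rho in \<open>auto simp: pw_def G_def intro!: mult_right_mono\<close>)
  also have "(LINT x:{-b..1}|lborel. rhop * G x) = rhop * (r\<^sup>2 * (LINT x:{-b..1}|lborel. (psi x)\<^sup>2) + (LINT x:{-b..1}|lborel. (psi1 x)\<^sup>2))"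
  proof -
    have i1: "set_integrable lborel {-b..1} (\<lambda>x. r\<^sup>2*(psi x)\<^sup>2)" using B by (intro cont_int continuous_intros)
    have i2: "set_integrable lborel {-b..1} (\<lambda>x. (psi1 x)\<^sup>2)" using B by (intro cont_int continuous_intros)
    show ?thesis unfolding G_def by (simp add: set_integral_add(2)[OF i1 i2])
  qed
  also have "\<dots> \<le> rhop * (r\<^sup>2 * (4*(1+b)\<^sup>2 * (LINT x:{-b..1}|lborel. (psi1 x)\<^sup>2)) + (LINT x:{-b..1}|lborel. (psi1 x)\<^sup>2))"
    using poincare[OF X b] rho by (intro mult_left_mono add_right_mono) auto
  finally show "2 * functJ b rhop rhom psi psi1 r \<le> rhop * (4 * r\<^sup>2 * (1+b)\<^sup>2 + 1) * (LINT x:{-b..1}|lborel. (psi1 x)\<^sup>2)"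
    using J by (simp add: algebra_simps)
qed

lemma A_lower:
  assumes X: "in_X b psi psi1 psi2" and b: "b > 0" and mu: "mup > 0" "mum > 0"
  shows "4 * min mup mum * r\<^sup>2 * (LINT x:{-b..1}|lborel. (psi1 x)\<^sup>2)
     \<le> (LINT x:{-b..1}|lborel. pw mup mum x * (4 * r\<^sup>2 * (psi1 x)\<^sup>2 + (r\<^sup>2 * psi x + psi2 x)\<^sup>2))"
proof -
  note B = X_basic[OF X b]
  have i: "set_integrable lborel {-b..1} (\<lambda>x. 4 * min mup mum * r\<^sup>2 * (psi1 x)\<^sup>2)"
    using B by (intro cont_int continuous_intros)
  have "(LINT x:{-b..1}|lborel. 4 * min mup mum * r\<^sup>2 * (psi1 x)\<^sup>2)
     \<le> (LINT x:{-b..1}|lborel. pw mup mum x * (4 * r\<^sup>2 * (psi1 x)\<^sup>2 + (r\<^sup>2 * psi x + psi2 x)\<^sup>2))"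
  proof (rule set_integral_mono[OF i X_int(2)[OF X b]])
    fix x
    have "min mup mum \<le> pw mup mum x" by (simp add: pw_def)
    then have "min mup mum * (4 * r\<^sup>2 * (psi1 x)\<^sup>2) \<le> pw mup mum x * (4 * r\<^sup>2 * (psi1 x)\<^sup>2)"
      by (intro mult_right_mono) auto
    also have "\<dots> \<le> pw mup mum x * (4 * r\<^sup>2 * (psi1 x)\<^sup>2 + (r\<^sup>2 * psi x + psi2 x)\<^sup>2)"
      using mu by (intro mult_left_mono) (auto simp: pw_def)
    finally show "4 * min mup mum * r\<^sup>2 * (psi1 x)\<^sup>2 \<le> pw mup mum x * (4 * r\<^sup>2 * (psi1 x)\<^sup>2 + (r\<^sup>2 * psi x + psi2 x)\<^sup>2)"
      by (simp add: algebra_simps)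
  qed
  then show ?thesis by (simp add: mult.assoc)
qed


lemma test_in_X:
  assumes b: "b > 0"
  shows "in_X b (\<lambda>x. l*(x+b)\<^sup>2*(1-x)) (\<lambda>x. l*(2*(x+b)*(1-x) - (x+b)\<^sup>2)) (\<lambda>x. l*(2*(1-x) - 4*(x+b)))"
proof -
  have d0: "((\<lambda>x. l*(x+b)\<^sup>2*(1-x)) has_real_derivative l*(2*(x+b)*(1-x) - (x+b)\<^sup>2)) (at x within S)" for x S
    by (rule derivative_eq_intros refl)+ (simp add: algebra_simps power2_eq_square)
  have d1: "((\<lambda>x. l*(2*(x+b)*(1-x) - (x+b)\<^sup>2)) has_real_derivative l*(2*(1-x) - 4*(x+b))) (at x within S)" for x S
    by (rule derivative_eq_intros refl)+ (simp add: algebra_simps power2_eq_square)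
  have c2: "continuous_on S (\<lambda>x. l*(2*(1-x) - 4*(x+b)))" for S by (intro continuous_intros)
  have c3: "continuous_on S (\<lambda>x. (l*(2*(1-x) - 4*(x+b)))\<^sup>2)" for S by (intro continuous_intros)
  have ftc: "l*(2*(x+b)*(1-x) - (x+b)\<^sup>2) = l*(2*(-b+b)*(1-(-b)) - (-b+b)\<^sup>2) + (LINT t:{-b..x}|lborel. l*(2*(1-t) - 4*(t+b)))"
    if "x \<in> {-b..1}" for x
  proof -
    have h: "(LINT t:{-b..x}|lborel. l*(2*(1-t) - 4*(t+b))) = l*(2*(x+b)*(1-x) - (x+b)\<^sup>2) - l*(2*(-b+b)*(1-(-b)) - (-b+b)\<^sup>2)"
      by (rule LINT_eq_FTC[OF _ d1 c2]) (use that in auto)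
    then show ?thesis by linarith
  qed
  show ?thesis unfolding in_X_def H2_triple_def
    using d0 ftc cont_int[OF c2] cont_int[OF c3] by auto
qed

lemma J_scale:
  "functJ b rhop rhom (\<lambda>x. l*(x+b)\<^sup>2*(1-x)) (\<lambda>x. l*(2*(x+b)*(1-x) - (x+b)\<^sup>2)) r
   = l\<^sup>2 * functJ b rhop rhom (\<lambda>x. 1*(x+b)\<^sup>2*(1-x)) (\<lambda>x. 1*(2*(x+b)*(1-x) - (x+b)\<^sup>2)) r"
proof -
  have sc: "q * (r\<^sup>2 * (l*y)\<^sup>2 + (l*z)\<^sup>2) = l\<^sup>2 * (q * (r\<^sup>2 * y\<^sup>2 + z\<^sup>2))" for q y z :: real
    by (simp add: power_mult_distrib algebra_simps)
  have eq: "(\<lambda>x. pw rhop rhom x * (r\<^sup>2 * (l*(x+b)\<^sup>2*(1-x))\<^sup>2 + (l*(2*(x+b)*(1-x) - (x+b)\<^sup>2))\<^sup>2))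
    = (\<lambda>x. l\<^sup>2 * (pw rhop rhom x * (r\<^sup>2 * (1*(x+b)\<^sup>2*(1-x))\<^sup>2 + (1*(2*(x+b)*(1-x) - (x+b)\<^sup>2))\<^sup>2)))"
  proof (rule ext)
    fix x
    show "pw rhop rhom x * (r\<^sup>2 * (l*(x+b)\<^sup>2*(1-x))\<^sup>2 + (l*(2*(x+b)*(1-x) - (x+b)\<^sup>2))\<^sup>2)
      = l\<^sup>2 * (pw rhop rhom x * (r\<^sup>2 * (1*(x+b)\<^sup>2*(1-x))\<^sup>2 + (1*(2*(x+b)*(1-x) - (x+b)\<^sup>2))\<^sup>2))"
      using sc[of "pw rhop rhom x" "(x+b)\<^sup>2*(1-x)" "2*(x+b)*(1-x) - (x+b)\<^sup>2"]
      by (simp only: mult.assoc mult_1_left)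
  qed
  show ?thesis unfolding functJ_def eq by simp
qed

theorem lemma2p1:
  fixes b g rhop rhom mup mum sigp sigm r :: real
  assumes "b > 0" and "g > 0"
    and "rhop > rhom" and "rhom > 0"
    and "mup > 0" and "mum > 0"
    and "sigp \<ge> 0" and "sigm \<ge> 0"
    and "(sigp = 0 \<and> sigm = 0) \<or> (sigp > 0 \<and> sigm > 0)"
    and "r > 0" and "ereal r < xi_crit g rhop rhom sigm"
  shows "(\<forall>a c. 0 < a \<and> a \<le> c \<longrightarrow>
            (\<exists>L. L-lipschitz_on {a..c} (alpha b g rhop rhom mup mum sigp sigm r)))
       \<and> continuous_on {0<..} (alpha b g rhop rhom mup mum sigp sigm r)
       \<and> strict_mono_on {0<..} (alpha b g rhop rhom mup mum sigp sigm r)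
       \<and> (\<exists>C0 C1 C2. C0 > 0 \<and> C1 > 0 \<and> C2 > 0 \<and>
            (\<forall>s>0. alpha b g rhop rhom mup mum sigp sigm r s \<le> - C0 + s * C1
                 \<and> alpha b g rhop rhom mup mum sigp sigm r s
                     \<ge> - (2 * g * (rhop - rhom) / rhom) * r + s * C2))"
proof -
  note as = assms
  have b: "b > 0" and r: "r > 0" and rho: "rhop \<ge> rhom" "rhom > 0" and mu: "mup > 0" "mum > 0"
    using assms by auto
  define Aof where "Aof = (\<lambda>psi psi1 psi2. (LINT x:{-b..1}|lborel. pw mup mum x * (4 * r\<^sup>2 * (psi1 x)\<^sup>2 + (r\<^sup>2 * psi x + psi2 x)\<^sup>2)) / 2)"
  define Nof where "Nof = (\<lambda>psi. 1/2 * r\<^sup>2 * (sigp * r\<^sup>2 + g * rhop) * ((psi::real\<Rightarrow>real) 1)\<^sup>2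
     + 1/2 * r\<^sup>2 * (sigm * r\<^sup>2 - g * (rhop - rhom)) * (psi 0)\<^sup>2)"
  define T where "T = {(Aof psi psi1 psi2, Nof psi) | psi psi1 psi2. in_X b psi psi1 psi2 \<and> functJ b rhop rhom psi psi1 r = 1}"
  define m where "m = min mup mum"
  define D where "D = rhop * (4 * r\<^sup>2 * (1+b)\<^sup>2 + 1)"
  define c where "c = 4 * m * r\<^sup>2 / D"
  define K0 where "K0 = g * (rhop - rhom) * r / rhom"
  have Dpos: "D > 0" unfolding D_def using rho by (intro mult_pos_pos) (auto intro: add_nonneg_pos)
  have mpos: "m > 0" unfolding m_def using mu by simp
  have cpos: "c > 0" unfolding c_def using Dpos mpos r by simp
  have K0: "K0 \<ge> 0" unfolding K0_def using as rho by simp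
  have crit: "sigm * r\<^sup>2 < g * (rhop - rhom)"
  proof (cases "sigm > 0")
    case True
    then have "r < sqrt (g * (rhop - rhom) / sigm)" using as(11) by (simp add: xi_crit_def)
    then have "r\<^sup>2 < (sqrt (g * (rhop - rhom) / sigm))\<^sup>2" using r by (intro power_strict_mono) auto
    also have "\<dots> = g * (rhop - rhom) / sigm" using True as by simp
    finally show ?thesis using True by (simp add: field_simps)
  next
    case False
    then show ?thesis using as by simp
  qed
  have alpha_eq: "alpha b g rhop rhom mup mum sigp sigm r s = Inf ((\<lambda>(A,N). s*A+N) ` T)" if "s > 0" for s
  proof -
    have "{energyE b g rhop rhom mup mum sigp sigm psi psi1 psi2 r s | psi psi1 psi2.
            in_X b psi psi1 psi2 \<and> functJ b rhop rhom psi psi1 r = 1} = (\<lambda>(A,N). s*A+N) ` T"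
    proof (rule set_eqI, rule iffI)
      fix x assume "x \<in> {energyE b g rhop rhom mup mum sigp sigm psi psi1 psi2 r s | psi psi1 psi2.
            in_X b psi psi1 psi2 \<and> functJ b rhop rhom psi psi1 r = 1}"
      then obtain psi psi1 psi2 where x: "x = energyE b g rhop rhom mup mum sigp sigm psi psi1 psi2 r s"
        and P: "in_X b psi psi1 psi2 \<and> functJ b rhop rhom psi psi1 r = 1" by blast
      have x': "x = (\<lambda>(A,N). s*A+N) (Aof psi psi1 psi2, Nof psi)"
        unfolding x energy_split Aof_def Nof_def by simp
      have "(Aof psi psi1 psi2, Nof psi) \<in> T" unfolding T_def using P by blast
      then show "x \<in> (\<lambda>(A,N). s*A+N) ` T" unfolding x' by (rule imageI)
    next
      fix x assume "x \<in> (\<lambda>(A,N). s*A+N) ` T"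
      then obtain p where p: "p \<in> T" "x = (\<lambda>(A,N). s*A+N) p" by blast
      then obtain psi psi1 psi2 where pe: "p = (Aof psi psi1 psi2, Nof psi)"
        and P: "in_X b psi psi1 psi2 \<and> functJ b rhop rhom psi psi1 r = 1" unfolding T_def by blast
      have "x = energyE b g rhop rhom mup mum sigp sigm psi psi1 psi2 r s"
        unfolding p(2) pe energy_split Aof_def Nof_def by simp
      then show "x \<in> {energyE b g rhop rhom mup mum sigp sigm psi psi1 psi2 r s | psi psi1 psi2.
            in_X b psi psi1 psi2 \<and> functJ b rhop rhom psi psi1 r = 1}" using P by blast
    qed
    then show ?thesis unfolding alpha_def by simp
  qed
  have TB: "A \<ge> c \<and> N \<ge> -K0" if ANT: "(A,N) \<in> T" for A N
  proof -
    obtain psi psi1 psi2 where X: "in_X b psi psi1 psi2" and J: "functJ b rhop rhom psi psi1 r = 1"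
      and AN: "A = Aof psi psi1 psi2" "N = Nof psi"
    proof -
      have "\<exists>psi psi1 psi2. (A,N) = (Aof psi psi1 psi2, Nof psi) \<and> in_X b psi psi1 psi2 \<and> functJ b rhop rhom psi psi1 r = 1"
        using ANT unfolding T_def by blast
      then show ?thesis using that by (metis prod.inject)
    qed
    define I where "I = (LINT x:{-b..1}|lborel. (psi1 x)\<^sup>2)"
    have "2 \<le> D * I" using J_facts(2)[OF X b r rho] J unfolding D_def I_def by simp
    then have I: "2 / D \<le> I" using Dpos by (simp add: divide_le_eq mult.commute)
    have "4 * m * r\<^sup>2 * I \<le> 2 * A" using A_lower[OF X b mu, of r] AN unfolding Aof_def m_def I_def by simp
    moreover have "c = 2 * m * r\<^sup>2 * (2 / D)" unfolding c_def by simp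
    moreover have "2 * m * r\<^sup>2 * (2 / D) \<le> 2 * m * r\<^sup>2 * I" using I mpos by (intro mult_left_mono) auto
    ultimately have Ac: "A \<ge> c" by linarith
    have p0: "(psi 0)\<^sup>2 \<le> 2 / (r * rhom)" using J_facts(1)[OF X b r rho] J by simp
    have t1: "0 \<le> 1/2 * r\<^sup>2 * (sigp * r\<^sup>2 + g * rhop) * (psi 1)\<^sup>2"
      using as rho by (intro mult_nonneg_nonneg) auto
    have t2: "- (1/2 * r\<^sup>2 * (g * (rhop - rhom))) * (psi 0)\<^sup>2 \<le> 1/2 * r\<^sup>2 * (sigm * r\<^sup>2 - g * (rhop - rhom)) * (psi 0)\<^sup>2"
    proof (rule mult_right_mono)
      have "0 \<le> r\<^sup>2 * (sigm * r\<^sup>2)" using as by simp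
      moreover have "1/2 * r\<^sup>2 * (sigm * r\<^sup>2 - g * (rhop - rhom)) = 1/2 * (r\<^sup>2 * (sigm * r\<^sup>2)) - 1/2 * r\<^sup>2 * (g * (rhop - rhom))"
        by (simp add: field_simps)
      ultimately show "- (1/2 * r\<^sup>2 * (g * (rhop - rhom))) \<le> 1/2 * r\<^sup>2 * (sigm * r\<^sup>2 - g * (rhop - rhom))"
        by linarith
    qed simp
    have t3: "(1/2 * r\<^sup>2 * (g * (rhop - rhom))) * (psi 0)\<^sup>2 \<le> (1/2 * r\<^sup>2 * (g * (rhop - rhom))) * (2 / (r * rhom))"
      using p0 as by (intro mult_left_mono) auto
    have t4: "(1/2 * r\<^sup>2 * (g * (rhop - rhom))) * (2 / (r * rhom)) = K0"
      unfolding K0_def using r rho by (simp add: field_simps power2_eq_square)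
    have t2': "- ((1/2 * r\<^sup>2 * (g * (rhop - rhom))) * (psi 0)\<^sup>2) \<le> 1/2 * r\<^sup>2 * (sigm * r\<^sup>2 - g * (rhop - rhom)) * (psi 0)\<^sup>2"
      using t2 by simp
    have "N \<ge> -K0" using t1 t2' t3 t4 AN unfolding Nof_def by linarith
    then show ?thesis using Ac by simp
  qed
  define J1 where "J1 = functJ b rhop rhom (\<lambda>x. 1*(x+b)\<^sup>2*(1-x)) (\<lambda>x. 1*(2*(x+b)*(1-x) - (x+b)\<^sup>2)) r"
  have "(1*(0+b)\<^sup>2*(1-0))\<^sup>2 \<le> 2 * J1 / (r * rhom)"
    using J_facts(1)[OF test_in_X[OF b, of 1] b r rho] unfolding J1_def by simp
  then have "b^4 \<le> 2 * J1 / (r * rhom)" by (simp add: power2_eq_square eval_nat_numeral)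
  moreover have "b^4 > 0" using b by simp
  ultimately have "2 * J1 / (r * rhom) > 0" by linarith
  moreover have "r * rhom > 0" using r rho by simp
  ultimately have J1pos: "J1 > 0" by (auto simp: zero_less_divide_iff)
  define l where "l = 1 / sqrt J1"
  have lpos: "l > 0" unfolding l_def using J1pos by simp
  have Jl: "functJ b rhop rhom (\<lambda>x. l*(x+b)\<^sup>2*(1-x)) (\<lambda>x. l*(2*(x+b)*(1-x) - (x+b)\<^sup>2)) r = 1"
  proof -
    have "functJ b rhop rhom (\<lambda>x. l*(x+b)\<^sup>2*(1-x)) (\<lambda>x. l*(2*(x+b)*(1-x) - (x+b)\<^sup>2)) r = l\<^sup>2 * J1"
      using J_scale[of b rhop rhom l r] unfolding J1_def .
    also have "\<dots> = 1" unfolding l_def using J1pos by (simp add: power_divide)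
    finally show ?thesis .
  qed
  define A0 where "A0 = Aof (\<lambda>x. l*(x+b)\<^sup>2*(1-x)) (\<lambda>x. l*(2*(x+b)*(1-x) - (x+b)\<^sup>2)) (\<lambda>x. l*(2*(1-x) - 4*(x+b)))"
  define N0 where "N0 = Nof (\<lambda>x. l*(x+b)\<^sup>2*(1-x))"
  have T0: "(A0, N0) \<in> T" unfolding T_def A0_def N0_def mem_Collect_eq
    apply (rule exI[of _ "\<lambda>x. l*(x+b)\<^sup>2*(1-x)"], rule exI[of _ "\<lambda>x. l*(2*(x+b)*(1-x) - (x+b)\<^sup>2)"],
        rule exI[of _ "\<lambda>x. l*(2*(1-x) - 4*(x+b))"])
    apply (intro conjI refl)
     apply (rule test_in_X[OF b])
    apply (rule Jl)
    done
  have N0neg: "N0 < 0"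
  proof -
    have e: "N0 = (1/2 * r\<^sup>2 * (l * b\<^sup>2)\<^sup>2) * (sigm * r\<^sup>2 - g * (rhop - rhom))"
      unfolding N0_def Nof_def by (simp add: algebra_simps power2_eq_square)
    have p: "1/2 * r\<^sup>2 * (l * b\<^sup>2)\<^sup>2 > 0" using r lpos b by simp
    have n: "sigm * r\<^sup>2 - g * (rhop - rhom) < 0" using crit by simp
    show ?thesis unfolding e by (rule mult_pos_neg[OF p n])
  qed
  have TB': "\<forall>A N. (A,N) \<in> T \<longrightarrow> A \<ge> c \<and> N \<ge> -K0" using TB by blast
  have alpha_eq': "\<forall>s. s > 0 \<longrightarrow> alpha b g rhop rhom mup mum sigp sigm r s = Inf ((\<lambda>(A,N). s*A+N) ` T)"
    using alpha_eq by blast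
  note main = abstract_conclusion[OF T0 N0neg cpos K0 TB' alpha_eq']
  have A0pos: "A0 > 0" using TB[OF T0] cpos by simp
  have K0le: "- (2 * g * (rhop - rhom) / rhom) * r \<le> - K0"
  proof -
    have e: "- (2 * g * (rhop - rhom) / rhom) * r = - 2 * K0" unfolding K0_def using rho by (simp add: field_simps)
    show ?thesis unfolding e using K0 by linarith
  qed
  note m1 = conjunct1[OF main]
  note m2 = conjunct1[OF conjunct2[OF main]]
  note m3 = conjunct1[OF conjunct2[OF conjunct2[OF main]]]
  note m4 = conjunct2[OF conjunct2[OF conjunct2[OF main]]]
  have last: "\<forall>s>0. alpha b g rhop rhom mup mum sigp sigm r s \<le> - (- N0) + s * A0
                 \<and> alpha b g rhop rhom mup mum sigp sigm r s
                     \<ge> - (2 * g * (rhop - rhom) / rhom) * r + s * c"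
  proof (intro allI impI)
    fix s :: real assume s: "s > 0"
    have h: "alpha b g rhop rhom mup mum sigp sigm r s \<le> N0 + s*A0 \<and> - K0 + s*c \<le> alpha b g rhop rhom mup mum sigp sigm r s"
      by (rule m4[rule_format, OF s])
    have h1: "alpha b g rhop rhom mup mum sigp sigm r s \<le> N0 + s*A0" using h by (rule conjunct1)
    have h2: "- K0 + s*c \<le> alpha b g rhop rhom mup mum sigp sigm r s" using h by (rule conjunct2)
    show "alpha b g rhop rhom mup mum sigp sigm r s \<le> - (- N0) + s * A0
                 \<and> alpha b g rhop rhom mup mum sigp sigm r s
                     \<ge> - (2 * g * (rhop - rhom) / rhom) * r + s * c"
    proof (rule conjI)
      show "alpha b g rhop rhom mup mum sigp sigm r s \<le> - (- N0) + s * A0" using h1 by simp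
      show "alpha b g rhop rhom mup mum sigp sigm r s \<ge> - (2 * g * (rhop - rhom) / rhom) * r + s * c"
        using add_right_mono[OF K0le, of "s*c"] h2 by (rule order_trans)
    qed
  qed
  have ex: "\<exists>C0 C1 C2. C0 > 0 \<and> C1 > 0 \<and> C2 > 0 \<and>
            (\<forall>s>0. alpha b g rhop rhom mup mum sigp sigm r s \<le> - C0 + s * C1
                 \<and> alpha b g rhop rhom mup mum sigp sigm r s
                     \<ge> - (2 * g * (rhop - rhom) / rhom) * r + s * C2)"
  proof (rule exI[of _ "- N0"], rule exI[of _ A0], rule exI[of _ c], intro conjI)
    show "- N0 > 0" using N0neg by simp
    show "A0 > 0" by (rule A0pos)
    show "c > 0" by (rule cpos)
  qed (fact last)
  show ?thesis by (rule conjI[OF m1 conjI[OF m2 conjI[OF m3 ex]]])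
qed

end
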